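(* Let $\alpha\in(0,1)$, $T>0$, and $\mathcal{A}\in\mathbb{C}^{d\times d}$. Then the series of operators $\sum_{j=0}^\infty\mathcal{A}^j\,{}^LJ^{(j+1)\circ\alpha}$ converges (absolutely) in the Banach space $\mathcal{L}(\mathcal{C}[0,T])$ of bounded linear operators on $\mathcal{C}[0,T]$ with the induced norm.
   Context: $\mathcal{C}[0,T]$: continuous $y:[0,T]\to\mathbb{C}^d$ with sup norm $\|y\|_\infty=\max|y(t)|$. L-fractional integral: ${}^LJ^\alpha y(t)=\frac{1}{\Gamma(\alpha)\Gamma(2-\alpha)}\int_0^t (t-s)^{\alpha-1}s^{1-\alpha}y(s)\,ds$ (componentwise); ${}^LJ^{m\circ\alpha}$ is its $m$-fold composition. $\mathcal{A}^j{}^LJ^{(j+1)\circ\alpha}$ is the operator $y\mapsto(t\mapsto\mathcal{A}^j\,{}^LJ^{(j+1)\circ\alpha}y(t))$. *)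

theory Defs
  imports "HOL-Analysis.Analysis"
begin

definition matpow :: "complex^'d^'d \<Rightarrow> nat \<Rightarrow> complex^'d^'d" where
  "matpow A j = (((**) A) ^^ j) (mat 1)"

text \<open>The space C[0,T] of continuous functions [0,T] -> C^d (functions are
  represented as total functions real => complex^'d; only values on [0,T] matter).\<close>
definition Cspace :: "real \<Rightarrow> (real \<Rightarrow> complex^'d) set" where
  "Cspace T = {y. continuous_on {0..T} y}"

definition supnorm :: "real \<Rightarrow> (real \<Rightarrow> complex^'d) \<Rightarrow> real" where
  "supnorm T y = (SUP t\<in>{0..T}. norm (y t))"

definition bounded_op :: "real \<Rightarrow> ((real \<Rightarrow> complex^'d) \<Rightarrow> (real \<Rightarrow> complex^'e)) \<Rightarrow> bool" where
  "bounded_op T K = bdd_above {supnorm T (K y) | y. y \<in> Cspace T \<and> supnorm T y \<le> 1}"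

definition opnorm :: "real \<Rightarrow> ((real \<Rightarrow> complex^'d) \<Rightarrow> (real \<Rightarrow> complex^'e)) \<Rightarrow> real" where
  "opnorm T K = Sup {supnorm T (K y) | y. y \<in> Cspace T \<and> supnorm T y \<le> 1}"

definition LJ :: "real \<Rightarrow> (real \<Rightarrow> complex^'d) \<Rightarrow> (real \<Rightarrow> complex^'d)" where
  "LJ \<alpha> y = (\<lambda>t. (1 / (Gamma \<alpha> * Gamma (2 - \<alpha>))) *\<^sub>R
      integral {0..t} (\<lambda>s. ((t - s) powr (\<alpha> - 1) * s powr (1 - \<alpha>)) *\<^sub>R y s))"

definition LJpow :: "real \<Rightarrow> nat \<Rightarrow> (real \<Rightarrow> complex^'d) \<Rightarrow> (real \<Rightarrow> complex^'d)" where
  "LJpow \<alpha> m = (LJ \<alpha> ^^ m)"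

definition series_term :: "complex^'d^'d \<Rightarrow> real \<Rightarrow> nat \<Rightarrow> (real \<Rightarrow> complex^'d) \<Rightarrow> (real \<Rightarrow> complex^'d)" where
  "series_term A \<alpha> j y = (\<lambda>t. matpow A j *v LJpow \<alpha> (Suc j) y t)"

end

theory Submission
  imports Defs
begin


lemma w0_int:
  fixes \<alpha> :: real assumes a: "0 < \<alpha>"
  shows "((\<lambda>u. (1-u) powr (\<alpha>-1)) has_integral 1/\<alpha>) {0..1}"
proof -
  define G where "G = (\<lambda>u::real. - ((1-u) powr \<alpha>) / \<alpha>)"
  have "((\<lambda>u. (1-u) powr (\<alpha>-1)) has_integral (G 1 - G 0)) {0..1}"
  proof (rule fundamental_theorem_of_calculus_interior)
    show "continuous_on {0..1} G"
      unfolding G_def using a by (intro continuous_intros continuous_on_powr') auto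
    fix x :: real assume x: "x \<in> {0<..<1}"
    have "(G has_real_derivative (1-x) powr (\<alpha>-1)) (at x)"
      unfolding G_def using x a by (auto intro!: derivative_eq_intros simp: field_simps)
    then show "(G has_vector_derivative (1-x) powr (\<alpha>-1)) (at x)"
      by (simp add: has_real_derivative_iff_has_vector_derivative)
  qed simp
  then show ?thesis using a by (simp add: G_def)
qed

lemma prod_absint:
  fixes g :: "real \<Rightarrow> 'a::euclidean_space"
  assumes a: "0 < \<alpha>" and g: "continuous_on {0..1} g"
  shows "(\<lambda>u. (1-u) powr (\<alpha>-1) *\<^sub>R g u) absolutely_integrable_on {0..1}"
proof -
  have bl: "bilinear (\<lambda>(v::'a) (r::real). r *\<^sub>R v)"
    by (metis bounded_bilinear.flip[OF bounded_bilinear_scaleR] bilinear_conv_bounded_bilinear)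
  have w: "(\<lambda>u. (1-u) powr (\<alpha>-1)) absolutely_integrable_on {0..1}"
    using w0_int[OF a] by (intro nonnegative_absolutely_integrable_1) auto
  have "(\<lambda>x. (\<lambda>v r. r *\<^sub>R v) (g x) ((1-x) powr (\<alpha>-1))) absolutely_integrable_on {0..1}"
    apply (rule absolutely_integrable_bounded_measurable_product[OF bl _ _ _ w])
      apply (rule continuous_imp_measurable_on_sets_lebesgue[OF g]) apply simp
     apply simp
    by (intro compact_imp_bounded compact_continuous_image g) simp
  then show ?thesis by simp
qed

definition wt :: "real \<Rightarrow> real \<Rightarrow> real" where
  "wt \<alpha> u = (1-u) powr (\<alpha>-1) * u powr (1-\<alpha>)"

lemma rep:
  fixes y :: "real \<Rightarrow> 'a::euclidean_space"
  assumes a: "0 < \<alpha>" "\<alpha> < 1" and t: "0 < t" and y: "continuous_on {0..t} y"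
  shows "(\<lambda>u. wt \<alpha> u *\<^sub>R y (t*u)) integrable_on {0..1}"
   "((\<lambda>s. ((t-s) powr (\<alpha>-1) * s powr (1-\<alpha>)) *\<^sub>R y s) has_integral
       t *\<^sub>R integral {0..1} (\<lambda>u. wt \<alpha> u *\<^sub>R y (t*u))) {0..t}"
proof -
  define h where "h = (\<lambda>u. wt \<alpha> u *\<^sub>R y (t*u))"
  have gc: "continuous_on {0..1} (\<lambda>u. u powr (1-\<alpha>) *\<^sub>R y (t*u))"
  proof (rule continuous_on_scaleR)
    show "continuous_on {0..1} (\<lambda>u. y (t*u))"
      apply (rule continuous_on_compose2[OF y]) using t
      by (auto intro!: continuous_intros simp: mult_le_cancel_left1)
    show "continuous_on {0..1} (\<lambda>u::real. u powr (1-\<alpha>))"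
      by (rule continuous_on_powr') (use a in \<open>auto intro: continuous_intros\<close>)
  qed
  have hi: "h integrable_on {0..1}"
    using prod_absint[OF a(1) gc] unfolding absolutely_integrable_on_def
    by (simp add: h_def wt_def)
  then show "(\<lambda>u. wt \<alpha> u *\<^sub>R y (t*u)) integrable_on {0..1}" by (simp add: h_def)
  have "((\<lambda>x. h ((1/t) *\<^sub>R x + 0)) has_integral (1 / (\<bar>1/t\<bar> ^ DIM(real))) *\<^sub>R integral {0..1} h)
          ((\<lambda>x. (1 / (1/t)) *\<^sub>R x + -((1 / (1/t)) *\<^sub>R 0)) ` cbox 0 1)"
    by (rule has_integral_affinity) (use hi t in \<open>auto simp: integrable_integral\<close>)
  note aff = this
  have 1: "((\<lambda>x. h (x/t)) has_integral t *\<^sub>R integral {0..1} h) {0..t}"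
  proof -
    have "(\<lambda>x. x * t) ` {0..1} = {0..t}"
      using image_mult_atLeastAtMost[of t 0 1] t by (simp add: mult.commute)
    then show ?thesis using aff t by (simp add: divide_inverse mult.commute)
  qed
  show "((\<lambda>s. ((t-s) powr (\<alpha>-1) * s powr (1-\<alpha>)) *\<^sub>R y s) has_integral
       t *\<^sub>R integral {0..1} (\<lambda>u. wt \<alpha> u *\<^sub>R y (t*u))) {0..t}"
    unfolding h_def[symmetric]
  proof (rule has_integral_spike_finite_eq[THEN iffD1, OF _ _ 1, of "{}"])
    fix s assume s: "s \<in> {0..t} - {}"
    have e1: "1 - s/t = (t-s)/t" using t by (simp add: field_simps)
    have tt: "t powr (\<alpha>-1) * t powr (1-\<alpha>) = 1" using t by (simp flip: powr_add)
    have "wt \<alpha> (s/t) = (t-s) powr (\<alpha>-1) * s powr (1-\<alpha>)"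
      unfolding wt_def e1 using s t tt by (simp add: powr_divide)
    then show "((t-s) powr (\<alpha>-1) * s powr (1-\<alpha>)) *\<^sub>R y s = h (s/t)"
      unfolding h_def using t by simp
  qed simp
qed

lemma mul_in: "t \<in> {0..T} \<Longrightarrow> u \<in> {0..1} \<Longrightarrow> t * (u::real) \<in> {0..T}"
  using mult_left_le[of u t] by auto

lemma wt_nonneg: "0 \<le> wt \<alpha> u" by (simp add: wt_def)

lemma int_wt:
  fixes g :: "real \<Rightarrow> 'a::euclidean_space"
  assumes a: "0 < \<alpha>" "\<alpha> < 1" and g: "continuous_on {0..1} g"
  shows "(\<lambda>u. wt \<alpha> u *\<^sub>R g u) integrable_on {0..1}"
proof -
  have gc: "continuous_on {0..1} (\<lambda>u. u powr (1-\<alpha>) *\<^sub>R g u)"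
  proof (rule continuous_on_scaleR)
    show "continuous_on {0..1} (\<lambda>u::real. u powr (1-\<alpha>))"
      by (rule continuous_on_powr') (use a in \<open>auto intro: continuous_intros\<close>)
  qed (rule g)
  show ?thesis
    using prod_absint[OF a(1) gc] unfolding absolutely_integrable_on_def
    by (simp add: wt_def)
qed

lemma LJ_eq:
  fixes y :: "real \<Rightarrow> complex^'d"
  assumes a: "0 < \<alpha>" "\<alpha> < 1" and y: "continuous_on {0..T} y" and t: "t \<in> {0..T}"
  shows "LJ \<alpha> y t = ((1 / (Gamma \<alpha> * Gamma (2 - \<alpha>))) * t) *\<^sub>R integral {0..1} (\<lambda>u. wt \<alpha> u *\<^sub>R y (t*u))"
proof (cases "t = 0")
  case True then show ?thesis by (simp add: LJ_def)
next
  case False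
  then have tp: "0 < t" using t by auto
  have "continuous_on {0..t} y" using continuous_on_subset[OF y, of "{0..t}"] t by auto
  from rep(2)[OF a tp this] show ?thesis
    unfolding LJ_def by (simp add: integral_unique)
qed

lemma F_cont:
  fixes y :: "real \<Rightarrow> 'a::euclidean_space"
  assumes a: "0 < \<alpha>" "\<alpha> < 1" and y: "continuous_on {0..T} y" and T: "0 \<le> T"
  shows "continuous_on {0..T} (\<lambda>t. integral {0..1} (\<lambda>u. wt \<alpha> u *\<^sub>R y (t*u)))"
proof -
  obtain B where B: "\<And>s. s \<in> {0..T} \<Longrightarrow> norm (y s) \<le> B"
    using compact_imp_bounded[OF compact_continuous_image[OF y compact_Icc]]
    unfolding bounded_iff by (metis imageI)
  have yc: "continuous_on {0..1} (\<lambda>u. y (t*u))" if "t \<in> {0..T}" for t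
    apply (rule continuous_on_compose2[OF y]) using that
    using mul_in by (auto intro!: continuous_intros)
  show ?thesis
    unfolding continuous_on_sequentially comp_def
  proof (intro allI ballI impI, elim conjE)
    fix x :: "nat \<Rightarrow> real" and a0 assume a0: "a0 \<in> {0..T}" and xs: "\<forall>n. x n \<in> {0..T}"
      and lim: "x \<longlonglongrightarrow> a0"
    show "(\<lambda>n. integral {0..1} (\<lambda>u. wt \<alpha> u *\<^sub>R y (x n*u))) \<longlonglongrightarrow> integral {0..1} (\<lambda>u. wt \<alpha> u *\<^sub>R y (a0*u))"
    proof (rule dominated_convergence(2))
      show "(\<lambda>u. wt \<alpha> u *\<^sub>R y (x k*u)) integrable_on {0..1}" for k
        by (rule int_wt[OF a yc[OF xs[rule_format]]])
      show "(\<lambda>u. wt \<alpha> u * B) integrable_on {0..1}"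
        using int_wt[OF a, of "\<lambda>_. B"] by simp
      fix k and u :: real assume u: "u \<in> {0..1}"
      have "x k * u \<in> {0..T}" using xs u mul_in by blast
      then show "norm (wt \<alpha> u *\<^sub>R y (x k*u)) \<le> wt \<alpha> u * B"
        using B[of "x k * u"] wt_nonneg[of \<alpha> u] by (simp add: mult_left_mono)
    next
      fix u :: real assume u: "u \<in> {0..1}"
      have "a0 * u \<in> {0..T}" using a0 u mul_in by blast
      moreover have "\<forall>\<^sub>F n in sequentially. x n * u \<in> {0..T}"
        using xs u mul_in by (intro always_eventually) blast
      ultimately have "(\<lambda>n. y (x n * u)) \<longlonglongrightarrow> y (a0 * u)"
        by (intro continuous_on_tendsto_compose[OF y] tendsto_mult_right lim)
      then show "(\<lambda>n. wt \<alpha> u *\<^sub>R y (x n*u)) \<longlonglongrightarrow> wt \<alpha> u *\<^sub>R y (a0*u)"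
        by (rule tendsto_scaleR[OF tendsto_const])
    qed
  qed
qed



lemma LJ_cont:
  fixes y :: "real \<Rightarrow> complex^'d"
  assumes a: "0 < \<alpha>" "\<alpha> < 1" and y: "continuous_on {0..T} y" and T: "0 \<le> T"
  shows "continuous_on {0..T} (LJ \<alpha> y)"
proof (rule continuous_on_eq)
  show "continuous_on {0..T} (\<lambda>t. ((1 / (Gamma \<alpha> * Gamma (2 - \<alpha>))) * t) *\<^sub>R integral {0..1} (\<lambda>u. wt \<alpha> u *\<^sub>R y (t*u)))"
    by (intro continuous_on_scaleR continuous_intros F_cont[OF a y T])
  show "((1 / (Gamma \<alpha> * Gamma (2 - \<alpha>))) * t) *\<^sub>R integral {0..1} (\<lambda>u. wt \<alpha> u *\<^sub>R y (t*u)) = LJ \<alpha> y t"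
    if "t \<in> {0..T}" for t
    using LJ_eq[OF a y that] by simp
qed

definition Ik :: "real \<Rightarrow> nat \<Rightarrow> real" where
  "Ik \<alpha> k = integral {0..1} (\<lambda>u. wt \<alpha> u * u^k)"

lemma LJ_bound:
  fixes y :: "real \<Rightarrow> complex^'d"
  assumes a: "0 < \<alpha>" "\<alpha> < 1" and y: "continuous_on {0..T} y" and t: "t \<in> {0..T}"
    and M: "0 \<le> M" and yb: "\<And>s. s \<in> {0..T} \<Longrightarrow> norm (y s) \<le> M * s^k"
  shows "norm (LJ \<alpha> y t) \<le> M * ((1 / (Gamma \<alpha> * Gamma (2 - \<alpha>))) * Ik \<alpha> k) * t^(Suc k)"
proof -
  define c where "c = 1 / (Gamma \<alpha> * Gamma (2 - \<alpha>))"
  have c: "0 < c" unfolding c_def using a by (simp add: Gamma_real_pos)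
  have t0: "0 \<le> t" using t by simp
  have yc: "continuous_on {0..1} (\<lambda>u. y (t*u))"
    apply (rule continuous_on_compose2[OF y]) using t
    using mul_in by (auto intro!: continuous_intros)
  have "norm (integral {0..1} (\<lambda>u. wt \<alpha> u *\<^sub>R y (t*u))) \<le> integral {0..1} (\<lambda>u. wt \<alpha> u * (M * t^k * u^k))"
  proof (rule integral_norm_bound_integral)
    show "(\<lambda>u. wt \<alpha> u *\<^sub>R y (t*u)) integrable_on {0..1}" by (rule int_wt[OF a yc])
    show "(\<lambda>u. wt \<alpha> u * (M * t^k * u^k)) integrable_on {0..1}"
      using int_wt[OF a, of "\<lambda>u. M * t^k * u^k"] by (simp add: continuous_intros)
    fix u :: real assume u: "u \<in> {0..1}"
    have "norm (y (t*u)) \<le> M * (t*u)^k" using yb mul_in[OF t u] by blast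
    then show "norm (wt \<alpha> u *\<^sub>R y (t*u)) \<le> wt \<alpha> u * (M * t^k * u^k)"
      using wt_nonneg[of \<alpha> u] by (simp add: mult_left_mono power_mult_distrib mult.assoc)
  qed
  also have "\<dots> = M * t^k * Ik \<alpha> k"
    unfolding Ik_def by (simp flip: integral_mult_right add: mult_ac)
  finally have b: "norm (integral {0..1} (\<lambda>u. wt \<alpha> u *\<^sub>R y (t*u))) \<le> M * t^k * Ik \<alpha> k" .
  have "norm (LJ \<alpha> y t) = c * t * norm (integral {0..1} (\<lambda>u. wt \<alpha> u *\<^sub>R y (t*u)))"
    using LJ_eq[OF a y t] c t0 by (simp add: c_def)
  also have "\<dots> \<le> c * t * (M * t^k * Ik \<alpha> k)"
    using b c t0 by (simp add: mult_left_mono)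
  also have "\<dots> = M * (c * Ik \<alpha> k) * t^(Suc k)" by (simp add: mult_ac)
  finally show ?thesis by (simp add: c_def)
qed

lemma Ik_lim:
  assumes a: "0 < \<alpha>" "\<alpha> < 1"
  shows "(\<lambda>k. Ik \<alpha> k) \<longlonglongrightarrow> 0"
proof -
  have "(\<lambda>k. integral {0..1} (\<lambda>u. wt \<alpha> u * u^k)) \<longlonglongrightarrow> integral {0..1} (\<lambda>u::real. 0::real)"
  proof (rule dominated_convergence(2)[of "\<lambda>k u. wt \<alpha> u * u^k" "{0..1}" "\<lambda>u. wt \<alpha> u" "\<lambda>u. 0"])
    show "(\<lambda>u. wt \<alpha> u * u^k) integrable_on {0..1}" for k
      using int_wt[OF a, of "\<lambda>u. u^k"] by (simp add: continuous_intros)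
    show "(\<lambda>u. wt \<alpha> u) integrable_on {0..1}"
      using int_wt[OF a, of "\<lambda>u. 1::real"] by simp
    fix k and u :: real assume u: "u \<in> {0..1}"
    then show "norm (wt \<alpha> u * u^k) \<le> wt \<alpha> u"
      using wt_nonneg[of \<alpha> u] by (simp add: abs_mult mult_left_le power_le_one)
  next
    fix u :: real assume u: "u \<in> {0..1}"
    show "(\<lambda>k. wt \<alpha> u * u^k) \<longlonglongrightarrow> 0"
    proof (cases "u = 1")
      case True then show ?thesis by (simp add: wt_def)
    next
      case False
      then have "\<bar>u\<bar> < 1" using u by auto
      then have "(\<lambda>k. u^k) \<longlonglongrightarrow> 0" by (intro LIMSEQ_power_zero) simp
      then show ?thesis using tendsto_mult_right_zero by blast
    qed
  qed
  then show ?thesis unfolding Ik_def by simp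
qed



lemma sup_ge:
  fixes y :: "real \<Rightarrow> complex^'d"
  assumes "y \<in> Cspace T" "t \<in> {0..T}"
  shows "norm (y t) \<le> supnorm T y"
proof -
  have "bounded ((\<lambda>t. norm (y t)) ` {0..T})"
    using assms(1) unfolding Cspace_def
    by (intro compact_imp_bounded compact_continuous_image continuous_intros) auto
  then have "bdd_above ((\<lambda>t. norm (y t)) ` {0..T})" by (rule bounded_imp_bdd_above)
  then show ?thesis unfolding supnorm_def using assms(2) by (rule cSUP_upper2) simp
qed

lemma sup_le:
  fixes y :: "real \<Rightarrow> complex^'d"
  assumes "0 \<le> T" "\<And>t. t \<in> {0..T} \<Longrightarrow> norm (y t) \<le> B"
  shows "supnorm T y \<le> B"
  unfolding supnorm_def using assms by (intro cSUP_least) auto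

lemma op_le:
  fixes K :: "(real \<Rightarrow> complex^'d) \<Rightarrow> (real \<Rightarrow> complex^'d)"
  assumes T: "0 \<le> T" and B: "\<And>y. y \<in> Cspace T \<Longrightarrow> supnorm T y \<le> 1 \<Longrightarrow> supnorm T (K y) \<le> B"
  shows "opnorm T K \<le> B" "bounded_op T K"
proof -
  have z: "(\<lambda>t. 0) \<in> Cspace T" unfolding Cspace_def by simp
  have "supnorm T (\<lambda>t. 0::complex^'d) \<le> 1" using T by (intro sup_le) auto
  with z have ne: "{supnorm T (K y) | y. y \<in> Cspace T \<and> supnorm T y \<le> 1} \<noteq> {}" by blast
  show "opnorm T K \<le> B" unfolding opnorm_def using ne B by (intro cSup_least) auto
  show "bounded_op T K" unfolding bounded_op_def bdd_above_def using B by blast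
qed

lemma op_nonneg:
  fixes K :: "(real \<Rightarrow> complex^'d) \<Rightarrow> (real \<Rightarrow> complex^'d)"
  assumes T: "0 \<le> T" and KC: "\<And>y. y \<in> Cspace T \<Longrightarrow> K y \<in> Cspace T" and bo: "bounded_op T K"
  shows "0 \<le> opnorm T K"
proof -
  have z: "(\<lambda>t. 0) \<in> Cspace T" unfolding Cspace_def by simp
  have "supnorm T (\<lambda>t. 0::complex^'d) \<le> 1" using T by (intro sup_le) auto
  with z have mem: "supnorm T (K (\<lambda>t. 0)) \<in> {supnorm T (K y) | y. y \<in> Cspace T \<and> supnorm T y \<le> 1}" by blast
  have "0 \<le> norm (K (\<lambda>t. 0) 0)" by simp
  also have "\<dots> \<le> supnorm T (K (\<lambda>t. 0))" using KC[OF z] T by (intro sup_ge) auto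
  also have "\<dots> \<le> opnorm T K" unfolding opnorm_def
    using bo mem unfolding bounded_op_def by (intro cSup_upper)
  finally show ?thesis .
qed

lemma matpow_bound:
  fixes A :: "complex^'d^'d"
  assumes K: "\<And>x. norm (A *v x) \<le> norm x * K" and K0: "0 \<le> K"
  shows "norm (matpow A j *v x) \<le> K^j * norm x"
proof (induction j arbitrary: x)
  case 0 then show ?case by (simp add: matpow_def)
next
  case (Suc j)
  have "matpow A (Suc j) *v x = A *v (matpow A j *v x)"
    by (simp add: matpow_def matrix_vector_mul_assoc)
  also have "norm \<dots> \<le> norm (matpow A j *v x) * K" by (rule K)
  also have "\<dots> \<le> K^j * norm x * K" using Suc K0 by (simp add: mult_right_mono)
  finally show ?case by (simp add: mult_ac)
qed

lemma LJpow_bound: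
  fixes y :: "real \<Rightarrow> complex^'d"
  assumes a: "0 < \<alpha>" "\<alpha> < 1" and y: "continuous_on {0..T} y" and T: "0 \<le> T"
    and Y: "0 \<le> Y" and yb: "\<And>s. s \<in> {0..T} \<Longrightarrow> norm (y s) \<le> Y"
  shows "continuous_on {0..T} (LJpow \<alpha> m y) \<and>
    (\<forall>t\<in>{0..T}. norm (LJpow \<alpha> m y t) \<le> Y * (\<Prod>k<m. (1 / (Gamma \<alpha> * Gamma (2 - \<alpha>))) * Ik \<alpha> k) * t^m)"
proof (induction m)
  case 0 then show ?case using y yb by (simp add: LJpow_def)
next
  case (Suc m)
  define c where "c = 1 / (Gamma \<alpha> * Gamma (2 - \<alpha>))"
  have c: "0 < c" unfolding c_def using a by (simp add: Gamma_real_pos)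
  have Ik0: "0 \<le> Ik \<alpha> k" for k unfolding Ik_def
  proof (rule integral_nonneg)
    show "(\<lambda>u. wt \<alpha> u * u^k) integrable_on {0..1}"
      using int_wt[OF a, of "\<lambda>u. u^k"] by (simp add: continuous_intros)
  qed (use wt_nonneg in auto)
  have e: "LJpow \<alpha> (Suc m) y = LJ \<alpha> (LJpow \<alpha> m y)" by (simp add: LJpow_def)
  have IH1: "continuous_on {0..T} (LJpow \<alpha> m y)"
    and IH2: "\<And>t. t \<in> {0..T} \<Longrightarrow> norm (LJpow \<alpha> m y t) \<le> Y * (\<Prod>k<m. c * Ik \<alpha> k) * t^m"
    using Suc by (auto simp: c_def)
  have M0: "0 \<le> Y * (\<Prod>k<m. c * Ik \<alpha> k)" using Y c Ik0 by (intro mult_nonneg_nonneg prod_nonneg) auto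
  show ?case unfolding e
  proof
    show "continuous_on {0..T} (LJ \<alpha> (LJpow \<alpha> m y))" by (rule LJ_cont[OF a IH1 T])
    show "\<forall>t\<in>{0..T}. norm (LJ \<alpha> (LJpow \<alpha> m y) t) \<le> Y * (\<Prod>k<Suc m. (1 / (Gamma \<alpha> * Gamma (2 - \<alpha>))) * Ik \<alpha> k) * t ^ Suc m"
    proof
      fix t assume t: "t \<in> {0..T}"
      have "norm (LJ \<alpha> (LJpow \<alpha> m y) t) \<le> Y * (\<Prod>k<m. c * Ik \<alpha> k) * (c * Ik \<alpha> m) * t ^ Suc m"
        using LJ_bound[OF a IH1 t M0 IH2] by (simp add: c_def)
      then show "norm (LJ \<alpha> (LJpow \<alpha> m y) t) \<le> Y * (\<Prod>k<Suc m. (1 / (Gamma \<alpha> * Gamma (2 - \<alpha>))) * Ik \<alpha> k) * t ^ Suc m"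
        by (simp add: c_def mult_ac)
    qed
  qed
qed



theorem mainTheorem8:
  fixes \<alpha> T :: real and A :: "complex^'d^'d"
  assumes "0 < \<alpha>" and "\<alpha> < 1" and "0 < T"
  shows "(\<forall>j. \<forall>y\<in>Cspace T. series_term A \<alpha> j y \<in> Cspace T)
    \<and> (\<forall>j. bounded_op T (series_term A \<alpha> j))
    \<and> summable (\<lambda>j. opnorm T (series_term A \<alpha> j))
    \<and> (\<exists>S. (\<forall>y\<in>Cspace T. S y \<in> Cspace T) \<and> bounded_op T S
         \<and> (\<lambda>n. opnorm T (\<lambda>y. (\<lambda>t. S y t - (\<Sum>j<n. series_term A \<alpha> j y t))))
              \<longlonglongrightarrow> 0)"
proof -
  note a = assms(1,2)
  have T0: "0 \<le> T" using assms(3) by simp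
  obtain K where K0: "0 < K" and K: "\<And>x. norm (A *v x) \<le> norm x * K"
    using bounded_linear.pos_bounded[OF matrix_vector_mul_bounded_linear[of A]] by blast
  define c where "c = 1 / (Gamma \<alpha> * Gamma (2 - \<alpha>))"
  have c: "0 < c" unfolding c_def using a by (simp add: Gamma_real_pos)
  define r where "r k = c * Ik \<alpha> k" for k
  define b where "b m = (\<Prod>k<m. r k)" for m
  define Mj where "Mj j = K^j * b (Suc j) * T^(Suc j)" for j
  have Ik0: "0 \<le> Ik \<alpha> k" for k unfolding Ik_def
  proof (rule integral_nonneg)
    show "(\<lambda>u. wt \<alpha> u * u^k) integrable_on {0..1}"
      using int_wt[OF a, of "\<lambda>u. u^k"] by (simp add: continuous_intros)
  qed (use wt_nonneg in auto)
  have r0: "0 \<le> r k" for k unfolding r_def using c Ik0 by simp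
  have b0: "0 \<le> b m" for m unfolding b_def using r0 by (simp add: prod_nonneg)
  have M0: "0 \<le> Mj j" for j unfolding Mj_def using K0 b0 T0 by simp
  have rlim: "(\<lambda>k. K * T * r k) \<longlonglongrightarrow> 0"
  proof -
    have "(\<lambda>k. K * (T * (c * Ik \<alpha> k))) \<longlonglongrightarrow> 0"
      by (intro tendsto_mult_right_zero Ik_lim[OF a])
    then show ?thesis unfolding r_def by (simp add: mult.assoc)
  qed
  have Msum: "summable Mj"
  proof -
    obtain N where N: "\<And>n. n \<ge> N \<Longrightarrow> K * T * r n < 1/2"
      using order_tendstoD(2)[OF rlim, of "1/2"] by (auto simp: eventually_sequentially)
    show ?thesis
    proof (rule summable_ratio_test[of "1/2" N])
      fix n assume n: "n \<ge> N"
      have "Mj (Suc n) = (K * T * r (Suc n)) * Mj n"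
        unfolding Mj_def b_def by (simp add: mult_ac)
      also have "\<dots> \<le> 1/2 * Mj n"
        using N[of "Suc n"] n M0[of n] by (intro mult_right_mono) auto
      finally show "norm (Mj (Suc n)) \<le> 1/2 * norm (Mj n)" using M0 by simp
    qed simp
  qed
  have termC: "series_term A \<alpha> j y \<in> Cspace T" if y: "y \<in> Cspace T" for j y
  proof -
    have Y: "\<And>s. s \<in> {0..T} \<Longrightarrow> norm (y s) \<le> supnorm T y" using sup_ge[OF y] by blast
    have yc: "continuous_on {0..T} y" using y unfolding Cspace_def by simp
    have "(0::real) \<in> {0..T}" using T0 by simp
    from Y[OF this] have Y0: "0 \<le> supnorm T y" by (rule order_trans[OF norm_ge_zero])
    have "continuous_on {0..T} (LJpow \<alpha> (Suc j) y)"
      using LJpow_bound[OF a yc T0 Y0 Y] by blast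
    then show ?thesis unfolding Cspace_def series_term_def
      by (auto intro: bounded_linear.continuous_on[OF matrix_vector_mul_bounded_linear])
  qed
  have termB: "norm (series_term A \<alpha> j y t) \<le> supnorm T y * Mj j"
    if y: "y \<in> Cspace T" and t: "t \<in> {0..T}" for j y t
  proof -
    have Y: "\<And>s. s \<in> {0..T} \<Longrightarrow> norm (y s) \<le> supnorm T y" using sup_ge[OF y] by blast
    have yc: "continuous_on {0..T} y" using y unfolding Cspace_def by simp
    have "(0::real) \<in> {0..T}" using T0 by simp
    from Y[OF this] have Y0: "0 \<le> supnorm T y" by (rule order_trans[OF norm_ge_zero])
    have L: "norm (LJpow \<alpha> (Suc j) y t) \<le> supnorm T y * b (Suc j) * t^(Suc j)"
      using LJpow_bound[OF a yc T0 Y0 Y, of "Suc j"] t unfolding b_def r_def c_def by blast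
    have "norm (series_term A \<alpha> j y t) \<le> K^j * norm (LJpow \<alpha> (Suc j) y t)"
      unfolding series_term_def using matpow_bound[OF K] K0 by simp
    also have "\<dots> \<le> K^j * (supnorm T y * b (Suc j) * t^(Suc j))"
      using L K0 by (simp add: mult_left_mono)
    also have "\<dots> \<le> K^j * (supnorm T y * b (Suc j) * T^(Suc j))"
      using t K0 Y0 b0 by (intro mult_left_mono power_mono) (auto simp: mult_nonneg_nonneg)
    also have "\<dots> = supnorm T y * Mj j" by (simp add: Mj_def mult_ac)
    finally show ?thesis .
  qed
  have termB1: "norm (series_term A \<alpha> j y t) \<le> Mj j"
    if y: "y \<in> Cspace T" "supnorm T y \<le> 1" and t: "t \<in> {0..T}" for j y t
    using termB[OF y(1) t, of j] y(2) M0[of j] mult_right_mono[of "supnorm T y" 1 "Mj j"] by simp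
  have tS: "supnorm T (series_term A \<alpha> j y) \<le> Mj j" if "y \<in> Cspace T" "supnorm T y \<le> 1" for j y
    by (rule sup_le[OF T0]) (rule termB1[OF that])
  have termOp: "opnorm T (series_term A \<alpha> j) \<le> Mj j" "bounded_op T (series_term A \<alpha> j)" for j
    using op_le[OF T0, of "series_term A \<alpha> j" "Mj j", OF tS] by auto
  have part3: "summable (\<lambda>j. opnorm T (series_term A \<alpha> j))"
  proof (rule summable_comparison_test[OF _ Msum])
    show "\<exists>N. \<forall>n\<ge>N. norm (opnorm T (series_term A \<alpha> n)) \<le> Mj n"
    proof (intro exI[of _ 0] allI impI)
      fix n :: nat
      have "0 \<le> opnorm T (series_term A \<alpha> n)" by (rule op_nonneg[OF T0 termC termOp(2)])
      then show "norm (opnorm T (series_term A \<alpha> n)) \<le> Mj n" using termOp(1)[of n] by simp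
    qed
  qed
  define S where "S y = (\<lambda>t. \<Sum>j. series_term A \<alpha> j y t)" for y
  have summ: "summable (\<lambda>j. series_term A \<alpha> j y t)" if "y \<in> Cspace T" "t \<in> {0..T}" for y t
  proof (rule summable_comparison_test[OF _ summable_mult[OF Msum]])
    show "\<exists>N. \<forall>n\<ge>N. norm (series_term A \<alpha> n y t) \<le> supnorm T y * Mj n"
      using termB[OF that] by blast
  qed
  have SC: "S y \<in> Cspace T" if y: "y \<in> Cspace T" for y
  proof -
    have ul: "uniform_limit {0..T} (\<lambda>n t. \<Sum>i<n. series_term A \<alpha> i y t) (S y) sequentially"
      unfolding S_def
      by (rule Weierstrass_m_test[OF termB[OF y] summable_mult[OF Msum]])
    have "continuous_on {0..T} (S y)"
    proof (rule uniform_limit_theorem[OF _ ul])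
      show "\<forall>\<^sub>F n in sequentially. continuous_on {0..T} (\<lambda>t. \<Sum>i<n. series_term A \<alpha> i y t)"
        using termC[OF y] unfolding Cspace_def by (intro always_eventually allI continuous_on_sum) auto
    qed simp
    then show ?thesis unfolding Cspace_def by simp
  qed
  have SB: "bounded_op T S"
  proof (rule op_le(2)[OF T0, of S "suminf Mj"])
    fix y :: "real \<Rightarrow> complex^'d" assume y: "y \<in> Cspace T" "supnorm T y \<le> 1"
    show "supnorm T (S y) \<le> suminf Mj"
    proof (rule sup_le[OF T0])
      fix t assume t: "t \<in> {0..T}"
      show "norm (S y t) \<le> suminf Mj" unfolding S_def
        by (rule norm_suminf_le[OF termB1[OF y t] Msum])
    qed
  qed
  define R where "R n y = (\<lambda>t. S y t - (\<Sum>j<n. series_term A \<alpha> j y t))" for n y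
  define tl where "tl n = (\<Sum>j. Mj (j + n))" for n
  have RB: "supnorm T (R n y) \<le> tl n" if y: "y \<in> Cspace T" "supnorm T y \<le> 1" for n y
  proof (rule sup_le[OF T0])
    fix t assume t: "t \<in> {0..T}"
    have "R n y t = (\<Sum>j. series_term A \<alpha> (j + n) y t)"
      unfolding R_def S_def using suminf_minus_initial_segment[OF summ[OF y(1) t]] by simp
    also have "norm \<dots> \<le> tl n" unfolding tl_def
      using termB1[OF y t] Msum by (intro norm_suminf_le) auto
    finally show "norm (R n y t) \<le> tl n" .
  qed
  have Rop: "opnorm T (R n) \<le> tl n" "bounded_op T (R n)" for n
    using op_le[OF T0, of "R n" "tl n", OF RB] by auto
  have RC: "R n y \<in> Cspace T" if y: "y \<in> Cspace T" for n y
    using SC[OF y] termC[OF y] unfolding R_def Cspace_def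
    by (intro CollectI continuous_on_diff continuous_on_sum) auto
  have R0: "0 \<le> opnorm T (R n)" for n by (rule op_nonneg[OF T0 RC Rop(2)])
  have tl0: "tl \<longlonglongrightarrow> 0"
  proof -
    have "(\<lambda>n. suminf Mj - (\<Sum>i<n. Mj i)) \<longlonglongrightarrow> suminf Mj - suminf Mj"
      by (intro tendsto_diff tendsto_const summable_LIMSEQ[OF Msum])
    then show ?thesis unfolding tl_def using suminf_minus_initial_segment[OF Msum] by simp
  qed
  have part4: "(\<lambda>n. opnorm T (R n)) \<longlonglongrightarrow> 0"
    by (rule tendsto_sandwich[OF _ _ tendsto_const tl0]) (use R0 Rop(1) in auto)
  show ?thesis
  proof (intro conjI allI ballI exI[of _ S])
    show "series_term A \<alpha> j y \<in> Cspace T" if "y \<in> Cspace T" for j y by (rule termC[OF that])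
    show "bounded_op T (series_term A \<alpha> j)" for j by (rule termOp(2))
    show "S y \<in> Cspace T" if "y \<in> Cspace T" for y by (rule SC[OF that])
    show "summable (\<lambda>j. opnorm T (series_term A \<alpha> j))" by (rule part3)
    show "bounded_op T S" by (rule SB)
    show "(\<lambda>n. opnorm T (\<lambda>y t. S y t - (\<Sum>j<n. series_term A \<alpha> j y t))) \<longlonglongrightarrow> 0"
      using part4 unfolding R_def[abs_def] .
  qed
qed

end
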